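(* Let $B\ge1$, $C\ge1$ and $\theta,\tilde\theta\in[-B,B]^P$. Then for all $\mathbf{x}\in\mathbb{R}^p$, \[ |f_\theta(\mathbf{x})-f_{\tilde\theta}(\mathbf{x})|\le 4(2rB)^L(|\mathbf{x}|_1\vee1)\,|\theta-\tilde\theta|_\infty. \]
   Context: ReLU $\sigma(x)=\max(x,0)$ coordinatewise. For $L,r\in\mathbb{N}$, $g_\theta(\mathbf{x})=W^{(L+1)}\mathbf{x}^{(L)}+v^{(L+1)}$ with $\mathbf{x}^{(0)}=\mathbf{x}\in\mathbb{R}^p$, $\mathbf{x}^{(l)}=\sigma(W^{(l)}\mathbf{x}^{(l-1)}+v^{(l)})$ for $l=1,\dots,L$, where $W^{(1)}\in\mathbb{R}^{r\times p}$, $W^{(2)},\dots,W^{(L)}\in\mathbb{R}^{r\times r}$, $W^{(L+1)}\in\mathbb{R}^{1\times r}$, $v^{(1)},\dots,v^{(L)}\in\mathbb{R}^r$, $v^{(L+1)}\in\mathbb{R}$, all entries collected in $\theta\in\mathbb{R}^P$, $P=(p+1)r+(L-1)(r+1)r+r+1$. Clipped network $f_\theta=(-C)\vee(g_\theta\wedge C)$. $|\cdot|_1,|\cdot|_\infty$ are the $\ell^1$ and $\ell^\infty$ norms. *)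

theory Defs
  imports Complex_Main
begin

text \<open>Parameters theta of a ReLU network, stored layerwise:
  W l i j is entry (i,j) of the weight matrix W^(l), v l i is entry i of the bias v^(l),
  for layers l = 1..L+1. Only the entries with valid indices (see the index sets below)
  are coordinates of theta in R^P; other values are irrelevant.\<close>

type_synonym params = "(nat \<Rightarrow> nat \<Rightarrow> nat \<Rightarrow> real) \<times> (nat \<Rightarrow> nat \<Rightarrow> real)"

definition relu :: "real \<Rightarrow> real" where
  "relu t = max t 0"

definition in_dim :: "nat \<Rightarrow> nat \<Rightarrow> nat \<Rightarrow> nat" where
  "in_dim p r l = (if l = 1 then p else r)"

definition out_dim :: "nat \<Rightarrow> nat \<Rightarrow> nat \<Rightarrow> nat" where
  "out_dim L r l = (if l = L + 1 then 1 else r)"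

definition weight_idx :: "nat \<Rightarrow> nat \<Rightarrow> nat \<Rightarrow> (nat \<times> nat \<times> nat) set" where
  "weight_idx p L r = {(l, i, j). 1 \<le> l \<and> l \<le> L + 1 \<and> i < out_dim L r l \<and> j < in_dim p r l}"

definition bias_idx :: "nat \<Rightarrow> nat \<Rightarrow> (nat \<times> nat) set" where
  "bias_idx L r = {(l, i). 1 \<le> l \<and> l \<le> L + 1 \<and> i < out_dim L r l}"

definition param_box :: "nat \<Rightarrow> nat \<Rightarrow> nat \<Rightarrow> real \<Rightarrow> params \<Rightarrow> bool" where
  "param_box p L r B \<theta> \<longleftrightarrow>
     (\<forall>(l, i, j) \<in> weight_idx p L r. \<bar>fst \<theta> l i j\<bar> \<le> B) \<and>
     (\<forall>(l, i) \<in> bias_idx L r. \<bar>snd \<theta> l i\<bar> \<le> B)"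

definition param_dist_inf :: "nat \<Rightarrow> nat \<Rightarrow> nat \<Rightarrow> params \<Rightarrow> params \<Rightarrow> real" where
  "param_dist_inf p L r \<theta> \<theta>' =
     Max ((\<lambda>(l, i, j). \<bar>fst \<theta> l i j - fst \<theta>' l i j\<bar>) ` weight_idx p L r \<union>
          (\<lambda>(l, i). \<bar>snd \<theta> l i - snd \<theta>' l i\<bar>) ` bias_idx L r)"

text \<open>Hidden layers: hidden p r \<theta> x l = x^(l) (a vector indexed by nat, meaningful below r,
  resp. below p for l = 0).\<close>
fun hidden :: "nat \<Rightarrow> nat \<Rightarrow> params \<Rightarrow> (nat \<Rightarrow> real) \<Rightarrow> nat \<Rightarrow> (nat \<Rightarrow> real)" where
  "hidden p r \<theta> x 0 = x"
| "hidden p r \<theta> x (Suc l) =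
     (\<lambda>i. relu ((\<Sum>j < in_dim p r (Suc l). fst \<theta> (Suc l) i j * hidden p r \<theta> x l j)
                 + snd \<theta> (Suc l) i))"

definition net_g :: "nat \<Rightarrow> nat \<Rightarrow> nat \<Rightarrow> params \<Rightarrow> (nat \<Rightarrow> real) \<Rightarrow> real" where
  "net_g p L r \<theta> x =
     (\<Sum>j < r. fst \<theta> (L + 1) 0 j * hidden p r \<theta> x L j) + snd \<theta> (L + 1) 0"

definition net_f :: "nat \<Rightarrow> nat \<Rightarrow> nat \<Rightarrow> real \<Rightarrow> params \<Rightarrow> (nat \<Rightarrow> real) \<Rightarrow> real" where
  "net_f p L r C \<theta> x = max (- C) (min (net_g p L r \<theta> x) C)"

definition l1_norm :: "nat \<Rightarrow> (nat \<Rightarrow> real) \<Rightarrow> real" where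
  "l1_norm p x = (\<Sum>j < p. \<bar>x j\<bar>)"

end

theory Submission
  imports Defs
begin

lemma relu_abs: "\<bar>relu a\<bar> \<le> \<bar>a\<bar>" by (simp add: relu_def)
lemma relu_lip: "\<bar>relu a - relu b\<bar> \<le> \<bar>a - b\<bar>" by (simp add: relu_def max_def)

lemma sum_bound:
  fixes w u :: "nat \<Rightarrow> real"
  assumes "B \<ge> 0" "\<And>j. j < n \<Longrightarrow> \<bar>w j\<bar> \<le> B" "\<And>j. j < n \<Longrightarrow> \<bar>u j\<bar> \<le> A"
  shows "\<bar>\<Sum>j<n. w j * u j\<bar> \<le> real n * (B * A)"
proof -
  have "\<bar>\<Sum>j<n. w j * u j\<bar> \<le> (\<Sum>j<n. \<bar>w j\<bar> * \<bar>u j\<bar>)"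
    by (metis (no_types, lifting) abs_mult sum.cong sum_abs)
  also have "\<dots> \<le> (\<Sum>j<n. B * A)"
    by (rule sum_mono) (use assms in \<open>auto intro: mult_mono\<close>)
  finally show ?thesis by simp
qed

lemma sum_bound1:
  fixes w u :: "nat \<Rightarrow> real"
  assumes "B \<ge> 0" "\<And>j. j < n \<Longrightarrow> \<bar>w j\<bar> \<le> B"
  shows "\<bar>\<Sum>j<n. w j * u j\<bar> \<le> B * (\<Sum>j<n. \<bar>u j\<bar>)"
proof -
  have "\<bar>\<Sum>j<n. w j * u j\<bar> \<le> (\<Sum>j<n. \<bar>w j\<bar> * \<bar>u j\<bar>)"
    by (metis (no_types, lifting) abs_mult sum.cong sum_abs)
  also have "\<dots> \<le> (\<Sum>j<n. B * \<bar>u j\<bar>)"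
    by (rule sum_mono) (use assms in \<open>auto intro: mult_right_mono\<close>)
  finally show ?thesis by (simp add: sum_distrib_left)
qed

lemma diff_bound:
  fixes w w' u u' :: "nat \<Rightarrow> real"
  assumes "B \<ge> 0" "D \<ge> 0"
    "\<And>j. j < n \<Longrightarrow> \<bar>w' j\<bar> \<le> B" "\<And>j. j < n \<Longrightarrow> \<bar>w j - w' j\<bar> \<le> D"
    "\<And>j. j < n \<Longrightarrow> \<bar>u j\<bar> \<le> A" "\<And>j. j < n \<Longrightarrow> \<bar>u j - u' j\<bar> \<le> E"
  shows "\<bar>(\<Sum>j<n. w j * u j) - (\<Sum>j<n. w' j * u' j)\<bar> \<le> real n * (D * A + B * E)"
proof -
  have "(\<Sum>j<n. w j * u j) - (\<Sum>j<n. w' j * u' j) = (\<Sum>j<n. (w j - w' j) * u j + w' j * (u j - u' j))"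
    by (simp add: sum_subtractf[symmetric] algebra_simps)
  hence "\<bar>(\<Sum>j<n. w j * u j) - (\<Sum>j<n. w' j * u' j)\<bar> \<le> (\<Sum>j<n. \<bar>(w j - w' j) * u j + w' j * (u j - u' j)\<bar>)"
    by (simp add: sum_abs)
  also have "\<dots> \<le> (\<Sum>j<n. D * A + B * E)"
  proof (rule sum_mono)
    fix j assume "j \<in> {..<n}"
    hence j: "j < n" by simp
    have "\<bar>(w j - w' j) * u j + w' j * (u j - u' j)\<bar> \<le> \<bar>w j - w' j\<bar> * \<bar>u j\<bar> + \<bar>w' j\<bar> * \<bar>u j - u' j\<bar>"
      by (metis abs_mult abs_triangle_ineq)
    also have "\<dots> \<le> D * A + B * E"
      by (rule add_mono; rule mult_mono) (use assms j in auto)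
    finally show "\<bar>(w j - w' j) * u j + w' j * (u j - u' j)\<bar> \<le> D * A + B * E" .
  qed
  finally show ?thesis by simp
qed

lemma layer_step:
  fixes w w' u u' :: "nat \<Rightarrow> real"
  assumes r1: "real r \<ge> 1" and K: "K = real r * B" and B0: "B \<ge> 0" and D0: "D \<ge> 0"
    and K1: "K \<ge> 1" and Q2: "Q \<ge> 2"
    and hu: "\<And>j. j < r \<Longrightarrow> real r * \<bar>u j\<bar> \<le> Q"
    and hd: "\<And>j. j < r \<Longrightarrow> 2*K * \<bar>u j - u' j\<bar> \<le> 3 * Q * D"
    and hw: "\<And>j. j < r \<Longrightarrow> \<bar>w j\<bar> \<le> B"
    and hw': "\<And>j. j < r \<Longrightarrow> \<bar>w' j\<bar> \<le> B"
    and hwd: "\<And>j. j < r \<Longrightarrow> \<bar>w j - w' j\<bar> \<le> D"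
    and hb: "\<bar>b\<bar> \<le> B" and hbd: "\<bar>b - b'\<bar> \<le> D"
  shows "real r * \<bar>(\<Sum>j<r. w j * u j) + b\<bar> \<le> 2 * K * Q"
    and "\<bar>((\<Sum>j<r. w j * u j) + b) - ((\<Sum>j<r. w' j * u' j) + b')\<bar> \<le> 3 * Q * D"
proof -
  define A where "A = Q / real r"
  define E where "E = 3 * Q * D / (2 * K)"
  have hA: "\<bar>u j\<bar> \<le> A" if "j < r" for j
    using hu[OF that] r1 by (simp add: A_def field_simps)
  have hE: "\<bar>u j - u' j\<bar> \<le> E" if "j < r" for j
    using hd[OF that] K1 by (simp add: E_def field_simps)
  have "\<bar>\<Sum>j<r. w j * u j\<bar> \<le> real r * (B * A)"
    by (rule sum_bound) (use B0 hw hA in auto)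
  also have "\<dots> = B * Q" using r1 by (simp add: A_def)
  finally have s1: "\<bar>\<Sum>j<r. w j * u j\<bar> \<le> B * Q" .
  have "\<bar>(\<Sum>j<r. w j * u j) + b\<bar> \<le> B * Q + B" using s1 hb by linarith
  hence "real r * \<bar>(\<Sum>j<r. w j * u j) + b\<bar> \<le> real r * (B * Q + B)"
    using r1 by (simp add: mult_left_mono)
  also have "\<dots> = K * Q + K" by (simp add: K algebra_simps)
  also have "\<dots> \<le> 2 * K * Q" using K1 Q2 by (simp add: mult_left_mono)
  finally show "real r * \<bar>(\<Sum>j<r. w j * u j) + b\<bar> \<le> 2 * K * Q" .
  have "\<bar>(\<Sum>j<r. w j * u j) - (\<Sum>j<r. w' j * u' j)\<bar> \<le> real r * (D * A + B * E)"
    by (rule diff_bound) (use B0 D0 hw' hwd hA hE in auto)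
  also have "\<dots> = D * Q + 3/2 * Q * D" proof -
    have Bn: "B \<noteq> 0" using K1 K by auto
    show ?thesis using r1 Bn by (simp add: A_def E_def K field_simps)
  qed
  finally have "\<bar>(\<Sum>j<r. w j * u j) - (\<Sum>j<r. w' j * u' j)\<bar> \<le> 5/2 * Q * D" by (simp add: algebra_simps)
  moreover have "D \<le> 1/2 * Q * D" using Q2 D0 mult_right_mono[OF Q2 D0] by simp
  ultimately show "\<bar>((\<Sum>j<r. w j * u j) + b) - ((\<Sum>j<r. w' j * u' j) + b')\<bar> \<le> 3 * Q * D"
    using hbd by linarith
qed

lemma finite_widx: "finite (weight_idx p L r)"
proof -
  have "weight_idx p L r \<subseteq> {..L+1} \<times> {..<max 1 r} \<times> {..<max p r}"
    by (auto simp: weight_idx_def in_dim_def out_dim_def split: if_splits)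
  thus ?thesis by (rule finite_subset) auto
qed

lemma finite_bidx: "finite (bias_idx L r)"
proof -
  have "bias_idx L r \<subseteq> {..L+1} \<times> {..<max 1 r}"
    by (auto simp: bias_idx_def out_dim_def split: if_splits)
  thus ?thesis by (rule finite_subset) auto
qed

lemma dist_w:
  assumes "(l, i, j) \<in> weight_idx p L r"
  shows "\<bar>fst \<theta> l i j - fst \<theta>' l i j\<bar> \<le> param_dist_inf p L r \<theta> \<theta>'"
  unfolding param_dist_inf_def
  by (rule Max_ge) (use assms finite_widx finite_bidx in \<open>force+\<close>)

lemma dist_b:
  assumes "(l, i) \<in> bias_idx L r"
  shows "\<bar>snd \<theta> l i - snd \<theta>' l i\<bar> \<le> param_dist_inf p L r \<theta> \<theta>'"
  unfolding param_dist_inf_def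
  by (rule Max_ge) (use assms finite_widx finite_bidx in \<open>force+\<close>)

theorem lemma4p4:
  fixes p L r :: nat and B C :: real and \<theta> \<theta>' :: params and x :: "nat \<Rightarrow> real"
  assumes "p \<ge> 1" and "L \<ge> 1" and "r \<ge> 1"
    and "B \<ge> 1" and "C \<ge> 1"
    and "param_box p L r B \<theta>" and "param_box p L r B \<theta>'"
  shows "\<bar>net_f p L r C \<theta> x - net_f p L r C \<theta>' x\<bar>
         \<le> 4 * (2 * real r * B) ^ L * max (l1_norm p x) 1 * param_dist_inf p L r \<theta> \<theta>'"
proof -
  define D where "D = param_dist_inf p L r \<theta> \<theta>'"
  define M where "M = max (l1_norm p x) 1"
  define K where "K = real r * B"
  define h where "h = hidden p r \<theta> x"
  define h' where "h' = hidden p r \<theta>' x"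
  have M1: "M \<ge> 1" by (simp add: M_def)
  have r1: "real r \<ge> 1" using assms by simp
  have "1*1 \<le> real r * B" by (rule mult_mono) (use assms r1 in auto)
  hence K1: "K \<ge> 1" by (simp add: K_def)
  have B0: "B \<ge> 0" using assms by simp
  have D0: "D \<ge> 0"
    using dist_b[of "1" 0 L r \<theta> \<theta>' p] assms unfolding D_def
    by (auto simp: bias_idx_def out_dim_def)
  have Wb: "\<bar>fst \<theta> l i j\<bar> \<le> B" "\<bar>fst \<theta>' l i j\<bar> \<le> B" "\<bar>fst \<theta> l i j - fst \<theta>' l i j\<bar> \<le> D"
    if "1 \<le> l" "l \<le> L+1" "i < out_dim L r l" "j < in_dim p r l" for l i j
  proof -
    have m: "(l, i, j) \<in> weight_idx p L r" using that by (simp add: weight_idx_def)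
    show "\<bar>fst \<theta> l i j\<bar> \<le> B" using assms(6) m by (force simp: param_box_def)
    show "\<bar>fst \<theta>' l i j\<bar> \<le> B" using assms(7) m by (force simp: param_box_def)
    show "\<bar>fst \<theta> l i j - fst \<theta>' l i j\<bar> \<le> D" using dist_w[OF m] by (simp add: D_def)
  qed
  have Vb: "\<bar>snd \<theta> l i\<bar> \<le> B" "\<bar>snd \<theta>' l i\<bar> \<le> B" "\<bar>snd \<theta> l i - snd \<theta>' l i\<bar> \<le> D"
    if "1 \<le> l" "l \<le> L+1" "i < out_dim L r l" for l i
  proof -
    have m: "(l, i) \<in> bias_idx L r" using that by (simp add: bias_idx_def)
    show "\<bar>snd \<theta> l i\<bar> \<le> B" using assms(6) m by (force simp: param_box_def)
    show "\<bar>snd \<theta>' l i\<bar> \<le> B" using assms(7) m by (force simp: param_box_def)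
    show "\<bar>snd \<theta> l i - snd \<theta>' l i\<bar> \<le> D" using dist_b[OF m] by (simp add: D_def)
  qed
  have main: "(\<forall>i<r. real r * \<bar>h l i\<bar> \<le> (2*K)^l * M) \<and>
              (\<forall>i<r. 2*K * \<bar>h l i - h' l i\<bar> \<le> 3 * (2*K)^l * D * M)"
    if "1 \<le> l" "l \<le> L" for l
    using that
  proof (induction l)
    case 0 then show ?case by simp
  next
    case (Suc l)
    show ?case
    proof (cases "l = 0")
      case True
      have l1: "Suc l = 1" using True by simp
      have ll: "1 \<le> L+1" by simp
      have o: "i < out_dim L r 1" if "i < r" for i using that assms(2) by (simp add: out_dim_def)
      have idm: "in_dim p r (Suc 0) = p" by (simp add: in_dim_def)
      have l1M: "l1_norm p x \<le> M" by (simp add: M_def)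
      have l10: "l1_norm p x \<ge> 0" by (simp add: l1_norm_def)
      have A: "real r * \<bar>h 1 i\<bar> \<le> (2*K)^1 * M \<and> 2*K * \<bar>h 1 i - h' 1 i\<bar> \<le> 3 * (2*K)^1 * D * M"
        if i: "i < r" for i
      proof -
        define s where "s = (\<Sum>j<p. fst \<theta> 1 i j * x j)"
        define s' where "s' = (\<Sum>j<p. fst \<theta>' 1 i j * x j)"
        have h1: "h 1 i = relu (s + snd \<theta> 1 i)"
          by (simp add: h_def s_def idm)
        have h1': "h' 1 i = relu (s' + snd \<theta>' 1 i)"
          by (simp add: h'_def s'_def idm)
        have "\<bar>s\<bar> \<le> B * l1_norm p x"
          unfolding s_def l1_norm_def
          by (rule sum_bound1) (use B0 Wb(1)[OF _ ll o[OF i]] in \<open>auto simp: idm\<close>)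
        also have "\<dots> \<le> B * M" using l1M B0 by (simp add: mult_left_mono)
        finally have sb: "\<bar>s\<bar> \<le> B * M" .
        have "s - s' = (\<Sum>j<p. (fst \<theta> 1 i j - fst \<theta>' 1 i j) * x j)"
          by (simp add: s_def s'_def sum_subtractf[symmetric] algebra_simps)
        hence "\<bar>s - s'\<bar> \<le> D * l1_norm p x"
          unfolding l1_norm_def
          by (simp only:) (rule sum_bound1, use D0 Wb(3)[OF _ ll o[OF i]] in \<open>auto simp: idm\<close>)
        also have "\<dots> \<le> D * M" using l1M D0 by (simp add: mult_left_mono)
        finally have sd: "\<bar>s - s'\<bar> \<le> D * M" .
        have vb: "\<bar>snd \<theta> 1 i\<bar> \<le> B" "\<bar>snd \<theta> 1 i - snd \<theta>' 1 i\<bar> \<le> D"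
          using Vb[OF _ ll o[OF i]] by auto
        have "\<bar>h 1 i\<bar> \<le> B * M + B" unfolding h1
          using relu_abs[of "s + snd \<theta> 1 i"] sb vb by linarith
        also have "\<dots> \<le> 2 * B * M" using mult_left_mono[OF M1 B0] by simp
        finally have "real r * \<bar>h 1 i\<bar> \<le> real r * (2 * B * M)" using r1 by (simp add: mult_left_mono)
        hence P1: "real r * \<bar>h 1 i\<bar> \<le> (2*K)^1 * M" by (simp add: K_def algebra_simps)
        have "\<bar>h 1 i - h' 1 i\<bar> \<le> D * M + D" unfolding h1 h1'
          using relu_lip[of "s + snd \<theta> 1 i" "s' + snd \<theta>' 1 i"] sd vb by linarith
        also have "\<dots> \<le> 2 * D * M" using mult_left_mono[OF M1 D0] by simp
        finally have "2*K * \<bar>h 1 i - h' 1 i\<bar> \<le> 2*K * (2 * D * M)" using K1 by (simp add: mult_left_mono)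
        also have "\<dots> \<le> 3 * (2*K)^1 * D * M" using K1 D0 M1 by (simp add: mult_nonneg_nonneg)
        finally show ?thesis using P1 by simp
      qed
      show ?thesis unfolding l1 using A by blast
    next
      case False
      have l1: "1 \<le> l" and lL: "l \<le> L" using False Suc.prems by auto
      note IH = Suc.IH[OF l1 lL]
      define Q where "Q = (2*K)^l * M"
      have "2*K \<le> (2*K)^l" using power_increasing[OF l1, of "2*K"] K1 by simp
      hence "2*K*1 \<le> Q" unfolding Q_def by (rule mult_mono) (use M1 K1 in auto)
      hence Q2: "Q \<ge> 2" using K1 by simp
      have ll: "1 \<le> Suc l" "Suc l \<le> L + 1" using Suc.prems by auto
      have idm: "in_dim p r (Suc l) = r" using False by (simp add: in_dim_def)
      have o: "i < out_dim L r (Suc l)" if "i < r" for i using that Suc.prems by (simp add: out_dim_def)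
      have A: "real r * \<bar>h (Suc l) i\<bar> \<le> (2*K)^Suc l * M \<and>
               2*K * \<bar>h (Suc l) i - h' (Suc l) i\<bar> \<le> 3 * (2*K)^Suc l * D * M"
        if i: "i < r" for i
      proof -
        have h1: "h (Suc l) i = relu ((\<Sum>j<r. fst \<theta> (Suc l) i j * h l j) + snd \<theta> (Suc l) i)"
          by (simp add: h_def idm)
        have h1': "h' (Suc l) i = relu ((\<Sum>j<r. fst \<theta>' (Suc l) i j * h' l j) + snd \<theta>' (Suc l) i)"
          by (simp add: h'_def idm)
        note LS = layer_step[OF r1 K_def B0 D0 K1 Q2, of "h l" "h' l" "fst \<theta> (Suc l) i" "fst \<theta>' (Suc l) i"
             "snd \<theta> (Suc l) i" "snd \<theta>' (Suc l) i"]
        have c: "real r * \<bar>(\<Sum>j<r. fst \<theta> (Suc l) i j * h l j) + snd \<theta> (Suc l) i\<bar> \<le> 2 * K * Q"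
          and d: "\<bar>((\<Sum>j<r. fst \<theta> (Suc l) i j * h l j) + snd \<theta> (Suc l) i) -
                  ((\<Sum>j<r. fst \<theta>' (Suc l) i j * h' l j) + snd \<theta>' (Suc l) i)\<bar> \<le> 3 * Q * D"
        proof -
          have hu: "real r * \<bar>h l j\<bar> \<le> Q" if "j < r" for j using IH that by (simp add: Q_def)
          have hd: "2*K * \<bar>h l j - h' l j\<bar> \<le> 3 * Q * D" if "j < r" for j
            using IH that by (simp add: Q_def mult_ac)
          show "real r * \<bar>(\<Sum>j<r. fst \<theta> (Suc l) i j * h l j) + snd \<theta> (Suc l) i\<bar> \<le> 2 * K * Q"
            by (rule LS(1)) (use hu hd Wb[OF ll o[OF i]] Vb[OF ll o[OF i]] in \<open>auto simp: idm\<close>)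
          show "\<bar>((\<Sum>j<r. fst \<theta> (Suc l) i j * h l j) + snd \<theta> (Suc l) i) -
                  ((\<Sum>j<r. fst \<theta>' (Suc l) i j * h' l j) + snd \<theta>' (Suc l) i)\<bar> \<le> 3 * Q * D"
            by (rule LS(2)) (use hu hd Wb[OF ll o[OF i]] Vb[OF ll o[OF i]] in \<open>auto simp: idm\<close>)
        qed
        have "real r * \<bar>h (Suc l) i\<bar> \<le> real r * \<bar>(\<Sum>j<r. fst \<theta> (Suc l) i j * h l j) + snd \<theta> (Suc l) i\<bar>"
          unfolding h1 by (rule mult_left_mono[OF relu_abs]) simp
        also note c
        finally have P1: "real r * \<bar>h (Suc l) i\<bar> \<le> (2*K)^Suc l * M" by (simp add: Q_def algebra_simps)
        have "\<bar>h (Suc l) i - h' (Suc l) i\<bar> \<le> 3 * Q * D"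
          unfolding h1 h1' using relu_lip d by (rule order_trans)
        hence "2*K * \<bar>h (Suc l) i - h' (Suc l) i\<bar> \<le> 2*K * (3 * Q * D)"
          using K1 by (intro mult_left_mono) auto
        thus ?thesis using P1 by (simp add: Q_def algebra_simps)
      qed
      show ?thesis using A by blast
    qed
  qed
  define Q where "Q = (2*K)^L * M"
  have "2*K \<le> (2*K)^L" using power_increasing[OF assms(2), of "2*K"] K1 by simp
  hence "2*K*1 \<le> Q" unfolding Q_def by (rule mult_mono) (use M1 K1 in auto)
  hence Q2: "Q \<ge> 2" using K1 by simp
  note IH = main[OF assms(2) order_refl]
  have ll: "1 \<le> L + 1" "L + 1 \<le> L + 1" by auto
  have o: "0 < out_dim L r (L+1)" by (simp add: out_dim_def)
  have idm: "in_dim p r (Suc L) = r" using assms(2) by (simp add: in_dim_def)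
  note LS = layer_step[OF r1 K_def B0 D0 K1 Q2, of "h L" "h' L" "fst \<theta> (L+1) 0" "fst \<theta>' (L+1) 0"
             "snd \<theta> (L+1) 0" "snd \<theta>' (L+1) 0"]
  have d: "\<bar>((\<Sum>j<r. fst \<theta> (L+1) 0 j * h L j) + snd \<theta> (L+1) 0) -
                  ((\<Sum>j<r. fst \<theta>' (L+1) 0 j * h' L j) + snd \<theta>' (L+1) 0)\<bar> \<le> 3 * Q * D"
  proof -
    have hu: "real r * \<bar>h L j\<bar> \<le> Q" if "j < r" for j using IH that by (simp add: Q_def)
    have hd: "2*K * \<bar>h L j - h' L j\<bar> \<le> 3 * Q * D" if "j < r" for j
      using IH that by (simp add: Q_def mult_ac)
    show ?thesis by (rule LS(2)) (use hu hd Wb[OF ll o] Vb[OF ll o] in \<open>auto simp: idm\<close>)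
  qed
  hence g: "\<bar>net_g p L r \<theta> x - net_g p L r \<theta>' x\<bar> \<le> 3 * Q * D"
    by (simp add: net_g_def h_def h'_def)
  have "\<bar>net_f p L r C \<theta> x - net_f p L r C \<theta>' x\<bar> \<le> \<bar>net_g p L r \<theta> x - net_g p L r \<theta>' x\<bar>"
    unfolding net_f_def by (simp add: max_def min_def abs_if)
  also note g
  also have "3 * Q * D \<le> 4 * Q * D" using Q2 D0 by (simp add: mult_right_mono)
  finally show ?thesis by (simp add: Q_def K_def D_def M_def mult.assoc)
qed

end
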